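(* Let $g\colon[r]^d\to\{0,1\}$ be $k$-monotone and let $f=(-1)^{g}\colon[r]^d\to\{-1,1\}$. Then $\mathrm{Inf}[f]\leq k\sqrt{d}$.
   Context: $[r]^d$ is ordered coordinatewise; $g$ is $k$-monotone if there is no chain $x_1\preceq\cdots\preceq x_{k+1}$ with $g(x_1)=1$ and $g(x_i)\neq g(x_{i+1})$ for all $i\in[k]$. For $f\colon[r]^d\to\{-1,1\}$, $\mathrm{Inf}_i[f]=2\Pr[f(x)\neq f(x^{(i)})]$, where $x$ is uniform in $[r]^d$ and $x^{(i)}$ is obtained from $x$ by replacing $x_i$ with an independent uniform element of $[r]$; $\mathrm{Inf}[f]=\sum_{i=1}^d\mathrm{Inf}_i[f]$. *)

theory Defs
  imports "HOL-Library.FuncSet" Complex_Main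
begin

text \<open>The grid [r]^d: points are functions on coordinates {0..<d} (coordinate i+1 of
  the paper is index i here) with values in [r] = {1..r}, extensional (PiE).\<close>
definition grid :: "nat \<Rightarrow> nat \<Rightarrow> (nat \<Rightarrow> nat) set" where
  "grid r d = PiE {..<d} (\<lambda>_. {1..r})"

definition grid_le :: "nat \<Rightarrow> (nat \<Rightarrow> nat) \<Rightarrow> (nat \<Rightarrow> nat) \<Rightarrow> bool" where
  "grid_le d x y \<longleftrightarrow> (\<forall>i<d. x i \<le> y i)"

definition k_monotone :: "nat \<Rightarrow> nat \<Rightarrow> nat \<Rightarrow> ((nat \<Rightarrow> nat) \<Rightarrow> nat) \<Rightarrow> bool" where
  "k_monotone r d k g \<longleftrightarrow>
     \<not> (\<exists>c :: nat \<Rightarrow> (nat \<Rightarrow> nat).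
          (\<forall>i\<in>{1..k+1}. c i \<in> grid r d) \<and>
          (\<forall>i\<in>{1..k}. grid_le d (c i) (c (Suc i))) \<and>
          g (c 1) = 1 \<and>
          (\<forall>i\<in>{1..k}. g (c i) \<noteq> g (c (Suc i))))"

definition influence_i :: "nat \<Rightarrow> nat \<Rightarrow> ((nat \<Rightarrow> nat) \<Rightarrow> real) \<Rightarrow> nat \<Rightarrow> real" where
  "influence_i r d f i =
     2 * real (card {(x, a). x \<in> grid r d \<and> a \<in> {1..r} \<and> f x \<noteq> f (x(i := a))})
       / real (card (grid r d) * r)"

definition influence :: "nat \<Rightarrow> nat \<Rightarrow> ((nat \<Rightarrow> nat) \<Rightarrow> real) \<Rightarrow> real" where
  "influence r d f = (\<Sum>i<d. influence_i r d f i)"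

end

theory Submission
  imports Defs
begin


definition cc :: "nat \<Rightarrow> nat \<Rightarrow> int" where "cc r a = 2 * int a - int r - 1"
definition TT :: "nat \<Rightarrow> nat \<Rightarrow> (nat \<Rightarrow> nat) \<Rightarrow> int" where
  "TT r d x = (\<Sum>i<d. cc r (x i))"

lemma finite_grid[simp]: "finite (grid r d)"
  by (simp add: grid_def finite_PiE)

lemma card_grid: "card (grid r d) = r ^ d"
  by (simp add: grid_def card_PiE)

lemma grid_upd: "x \<in> grid r d \<Longrightarrow> i < d \<Longrightarrow> a \<in> {1..r} \<Longrightarrow> x(i := a) \<in> grid r d"
  unfolding grid_def by (auto simp: PiE_iff extensional_def)

lemma grid_split:
  "(\<Sum>x\<in>grid r (Suc d). h x) = (\<Sum>a\<in>{1..r}. \<Sum>y\<in>grid r d. h (y(d:=a)))"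
proof -
  have e: "grid r (Suc d) = (\<lambda>(a, y). y(d := a)) ` ({1..r} \<times> grid r d)"
    unfolding grid_def lessThan_Suc by (rule PiE_insert_eq)
  have i: "inj_on (\<lambda>(a, y). y(d := a)) ({1..r} \<times> grid r d)"
    unfolding grid_def by (rule inj_combinator) simp
  show ?thesis
    unfolding e sum.reindex[OF i] sum.cartesian_product by (rule sum.cong) (auto simp: split_def)
qed

lemma TT_upd: "y \<in> grid r d \<Longrightarrow> TT r (Suc d) (y(d:=a)) = TT r d y + cc r a"
proof -
  assume "y \<in> grid r d"
  have "(\<Sum>i<d. cc r ((y(d:=a)) i)) = (\<Sum>i<d. cc r (y i))"
    by (rule sum.cong) auto
  then show ?thesis unfolding TT_def by simp
qed



lemma sum_cc0: "(\<Sum>a=1..r. cc r a) = 0"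
proof -
  have "\<forall>n. (\<Sum>a=1..n. 2 * int a) = int n * (int n + 1)"
  proof
    fix n show "(\<Sum>a=1..n. 2 * int a) = int n * (int n + 1)"
      by (induction n) (auto simp: algebra_simps)
  qed
  then show ?thesis unfolding cc_def by (simp add: sum_subtractf algebra_simps)
qed

lemma sum_sq_gen: "(\<Sum>a=1..n. (2 * real a - c)^2) = 4 * real n * (n+1) * (2*n+1) / 6 - 2 * c * n * (n+1) + n * c^2"
proof (induction n)
  case 0
  then show ?case by simp
next
  case (Suc n)
  have "(\<Sum>a=1..Suc n. (2 * real a - c)^2) = (\<Sum>a=1..n. (2 * real a - c)^2) + (2 * real (Suc n) - c)^2"
    by simp
  also have "\<dots> = 4 * real n * (n+1) * (2*n+1) / 6 - 2 * c * n * (n+1) + n * c^2 + (2 * real (Suc n) - c)^2"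
    using Suc.IH by (simp add: algebra_simps)
  also have "\<dots> = 4 * real (Suc n) * (Suc n+1) * (2*Suc n+1) / 6 - 2 * c * Suc n * (Suc n+1) + Suc n * c^2"
    by (simp add: power2_eq_square field_simps)
  finally show ?case by (simp add: algebra_simps)
qed

lemma sum_cc2: "(\<Sum>a=1..r. (real_of_int (cc r a))^2) = real r * (real r ^ 2 - 1) / 3"
proof -
  have "(\<Sum>a=1..r. (real_of_int (cc r a))^2) = (\<Sum>a=1..r. (2 * real a - (real r + 1))^2)"
    unfolding cc_def by (simp add: algebra_simps)
  also have "\<dots> = real r * (real r ^ 2 - 1) / 3"
    unfolding sum_sq_gen by (simp add: power2_eq_square power3_eq_cube algebra_simps)
  finally show ?thesis .
qed

lemma sum_cc0': "(\<Sum>a\<in>{Suc 0..r}. real_of_int (cc r a)) = 0"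
  using sum_cc0[of r] by (metis of_int_0 of_int_sum One_nat_def)

lemma sum_cc2': "(\<Sum>a\<in>{Suc 0..r}. (real_of_int (cc r a))^2) = real r * (real r ^ 2 - 1) / 3"
  using sum_cc2[of r] by simp

lemma M1: "(\<Sum>x\<in>grid r d. real_of_int (TT r d x)) = 0"
proof (induction d)
  case 0
  then show ?case by (simp add: TT_def)
next
  case (Suc d)
  have "(\<Sum>x\<in>grid r (Suc d). real_of_int (TT r (Suc d) x))
     = (\<Sum>a=1..r. \<Sum>y\<in>grid r d. real_of_int (TT r d y) + real_of_int (cc r a))"
    unfolding grid_split by (intro sum.cong refl) (simp add: TT_upd)
  also have "\<dots> = (\<Sum>a=1..r. real (r^d) * real_of_int (cc r a))"
    using Suc by (simp add: sum.distrib card_grid)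
  also have "\<dots> = real (r^d) * real_of_int (\<Sum>a=1..r. cc r a)"
    by (simp add: sum_distrib_left)
  also have "\<dots> = 0" by (simp add: sum_cc0')
  finally show ?case .
qed

lemma M2: "(\<Sum>x\<in>grid r d. (real_of_int (TT r d x))^2) = real r ^ d * real d * (real r ^ 2 - 1) / 3"
proof (induction d)
  case 0
  then show ?case by (simp add: TT_def)
next
  case (Suc d)
  have "(\<Sum>x\<in>grid r (Suc d). (real_of_int (TT r (Suc d) x))^2)
     = (\<Sum>a=1..r. \<Sum>y\<in>grid r d. (real_of_int (TT r d y))^2 + 2 * real_of_int (cc r a) * real_of_int (TT r d y) + (real_of_int (cc r a))^2)"
    unfolding grid_split by (intro sum.cong refl) (simp add: TT_upd power2_eq_square algebra_simps)
  also have "\<dots> = (\<Sum>a=1..r. real r ^ d * real d * (real r ^ 2 - 1) / 3 + real r ^ d * (real_of_int (cc r a))^2)"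
    using Suc by (simp add: sum.distrib card_grid sum_distrib_left[symmetric] M1)
  also have "\<dots> = real r * (real r ^ d * real d * (real r ^ 2 - 1) / 3) + real r ^ d * (real r * (real r ^ 2 - 1) / 3)"
    by (simp add: sum.distrib sum_distrib_left[symmetric] sum_cc2')
  also have "\<dots> = real r ^ Suc d * real (Suc d) * (real r ^ 2 - 1) / 3"
    by (simp only: power_Suc of_nat_Suc) (simp add: field_simps)
  finally show ?case .
qed



definition qd :: "nat \<Rightarrow> nat \<Rightarrow> int \<Rightarrow> real" where
  "qd r d t = real (card {x\<in>grid r d. TT r d x = t})"

lemma qd_nonneg: "qd r d t \<ge> 0" by (simp add: qd_def)

lemma qd_sum:
  assumes "finite S" "TT r d ` grid r d \<subseteq> S"
  shows "(\<Sum>x\<in>grid r d. h (TT r d x)) = (\<Sum>t\<in>S. qd r d t * h t)"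
proof -
  have "(\<Sum>t\<in>S. qd r d t * h t) = (\<Sum>t\<in>S. \<Sum>x\<in>{x. x \<in> grid r d \<and> TT r d x = t}. h (TT r d x))"
    unfolding qd_def by (intro sum.cong refl) simp
  also have "\<dots> = (\<Sum>x\<in>grid r d. h (TT r d x))"
    by (rule sum.group[OF _ assms(1,2)]) simp
  finally show ?thesis by simp
qed

lemma qd_rec: "qd r (Suc d) t = (\<Sum>a=1..r. qd r d (t - cc r a))"
proof -
  have "qd r (Suc d) t = (\<Sum>x\<in>grid r (Suc d). if TT r (Suc d) x = t then 1 else 0)"
    unfolding qd_def by (simp add: sum.If_cases Int_def)
  also have "\<dots> = (\<Sum>a=1..r. \<Sum>y\<in>grid r d. if TT r d y = t - cc r a then 1 else 0)"
    unfolding grid_split by (intro sum.cong refl) (auto simp: TT_upd)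
  also have "\<dots> = (\<Sum>a=1..r. qd r d (t - cc r a))"
    unfolding qd_def by (simp add: sum.If_cases Int_def)
  finally show ?thesis .
qed

lemma qd_0: "qd r 0 t = (if t = 0 then 1 else 0)"
  unfolding qd_def grid_def TT_def by simp

lemma qd_sym: "qd r d (- t) = qd r d t"
proof (induction d arbitrary: t)
  case 0
  then show ?case by (simp add: qd_0)
next
  case (Suc d)
  have "qd r (Suc d) (- t) = (\<Sum>a=1..r. qd r d (t + cc r a))"
    unfolding qd_rec using Suc.IH[of "t + cc r _"] by (intro sum.cong refl) (simp add: algebra_simps)
  also have "\<dots> = (\<Sum>a=1..r. qd r d (t + cc r (r + 1 - a)))"
    by (rule sum.atLeastAtMost_rev)
  also have "\<dots> = (\<Sum>a=1..r. qd r d (t - cc r a))"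
    by (intro sum.cong refl) (auto simp: cc_def of_nat_diff algebra_simps)
  finally show ?case by (simp add: qd_rec)
qed

lemma abs_cc: "a \<in> {1..r} \<Longrightarrow> \<bar>cc r a\<bar> \<le> int r - 1"
  unfolding cc_def by auto

lemma abs_TT: "x \<in> grid r d \<Longrightarrow> \<bar>TT r d x\<bar> \<le> int d * (int r - 1)"
proof -
  assume x: "x \<in> grid r d"
  have "\<bar>TT r d x\<bar> \<le> (\<Sum>i<d. \<bar>cc r (x i)\<bar>)"
    unfolding TT_def by (rule sum_abs)
  also have "\<dots> \<le> (\<Sum>i<d. int r - 1)"
    using x by (intro sum_mono abs_cc) (auto simp: grid_def PiE_iff)
  finally show ?thesis by simp
qed

lemma qd_supp: "\<bar>t\<bar> > int d * (int r - 1) \<Longrightarrow> qd r d t = 0"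
  unfolding qd_def using abs_TT by fastforce

lemma unimod_gen:
  fixes q :: "int \<Rightarrow> real"
  assumes sym: "\<And>t. q (- t) = q t" and mono: "\<And>t. t \<ge> -1 \<Longrightarrow> q (t + 2) \<le> q t"
    and uv: "\<bar>u\<bar> \<le> \<bar>v\<bar>" "even (v - u)"
  shows "q v \<le> q u"
proof -
  have qa: "q s = q \<bar>s\<bar>" for s
    using sym[of s] by (cases "s \<ge> 0") auto
  have step: "q (int a + 2 * int k) \<le> q (int a)" for a k :: nat
  proof (induction k)
    case 0 then show ?case by simp
  next
    case (Suc k)
    have "q (int a + 2 * int (Suc k)) = q ((int a + 2 * int k) + 2)" by (simp add: algebra_simps)
    also have "\<dots> \<le> q (int a + 2 * int k)" by (rule mono) simp
    finally show ?case using Suc by simp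
  qed
  have "even (\<bar>v\<bar> - \<bar>u\<bar>)"
    using uv(2) by (cases "v \<ge> 0"; cases "u \<ge> 0") (auto simp: algebra_simps even_minus)
  define k where "k = (\<bar>v\<bar> - \<bar>u\<bar>) div 2"
  have k: "\<bar>v\<bar> - \<bar>u\<bar> = 2 * k" unfolding k_def using \<open>even (\<bar>v\<bar> - \<bar>u\<bar>)\<close> by simp
  have "k \<ge> 0" using k uv(1) by simp
  then obtain kn :: nat where kn: "k = int kn" using nonneg_int_cases by blast
  obtain an :: nat where an: "\<bar>u\<bar> = int an" using abs_ge_zero nonneg_int_cases by metis
  have "\<bar>v\<bar> = int an + 2 * int kn" using k kn an by simp
  then show ?thesis using step[of an kn] qa[of u] qa[of v] an by simp
qed

lemma telesc: "(\<Sum>a=1..(n::nat). (f a - f (a - 1))) = f n - (f 0 :: real)"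
  by (induction n) auto

lemma qd_mono: "t \<ge> -1 \<Longrightarrow> qd r d (t + 2) \<le> qd r d t"
proof (induction d arbitrary: t)
  case 0
  then show ?case by (simp add: qd_0)
next
  case (Suc d)
  define f where "f a = qd r d (t - (2 * int a - int r - 1))" for a :: nat
  have "qd r (Suc d) t - qd r (Suc d) (t + 2) = (\<Sum>a=1..r. (f a - f (a - 1)))"
    unfolding qd_rec f_def cc_def sum_subtractf[symmetric]
    by (intro sum.cong refl) (auto simp: algebra_simps of_nat_diff)
  also have "\<dots> = f r - f 0" by (rule telesc)
  also have "\<dots> \<ge> 0"
  proof -
    have "qd r d (t + int r + 1) \<le> qd r d (t - int r + 1)"
      by (rule unimod_gen[OF qd_sym Suc.IH]) (use Suc.prems in auto)
    then show ?thesis unfolding f_def by (simp add: algebra_simps)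
  qed
  finally show ?case by simp
qed



lemma wcs:
  fixes w x :: "'a \<Rightarrow> real"
  assumes "finite A" "\<And>i. i \<in> A \<Longrightarrow> w i \<ge> 0"
  shows "(\<Sum>i\<in>A. w i * x i)^2 \<le> (\<Sum>i\<in>A. w i) * (\<Sum>i\<in>A. w i * (x i)^2)"
proof -
  have "0 \<le> (\<Sum>i\<in>A. \<Sum>j\<in>A. w i * w j * (x i - x j)^2)"
    by (intro sum_nonneg) (simp add: assms)
  also have "\<dots> = (\<Sum>i\<in>A. \<Sum>j\<in>A. w i * (x i)^2 * w j + w i * w j * (x j)^2 - 2 * (w i * x i) * (w j * x j))"
    by (intro sum.cong refl) (simp add: power2_eq_square algebra_simps)
  also have "\<dots> = (\<Sum>i\<in>A. \<Sum>j\<in>A. w i * (x i)^2 * w j) + (\<Sum>i\<in>A. \<Sum>j\<in>A. w i * w j * (x j)^2)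
      - 2 * (\<Sum>i\<in>A. \<Sum>j\<in>A. (w i * x i) * (w j * x j))"
    by (simp add: sum.distrib sum_subtractf sum_distrib_left mult.assoc)
  also have "\<dots> = 2 * ((\<Sum>i\<in>A. w i) * (\<Sum>i\<in>A. w i * (x i)^2)) - 2 * (\<Sum>i\<in>A. w i * x i)^2"
  proof -
    have a: "(\<Sum>i\<in>A. \<Sum>j\<in>A. w i * (x i)^2 * w j) = (\<Sum>i\<in>A. w i) * (\<Sum>i\<in>A. w i * (x i)^2)"
    proof -
      have "(\<Sum>i\<in>A. \<Sum>j\<in>A. w i * (x i)^2 * w j) = (\<Sum>i\<in>A. w i * (x i)^2 * (\<Sum>j\<in>A. w j))"
        by (simp add: sum_distrib_left)
      also have "\<dots> = (\<Sum>i\<in>A. w i * (x i)^2) * (\<Sum>j\<in>A. w j)" by (simp add: sum_distrib_right)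
      finally show ?thesis by (simp add: mult.commute)
    qed
    have b: "(\<Sum>i\<in>A. \<Sum>j\<in>A. w i * w j * (x j)^2) = (\<Sum>i\<in>A. w i) * (\<Sum>i\<in>A. w i * (x i)^2)"
      by (simp add: sum_product mult.assoc)
    have c: "(\<Sum>i\<in>A. \<Sum>j\<in>A. (w i * x i) * (w j * x j)) = (\<Sum>i\<in>A. w i * x i)^2"
      by (simp add: sum_product power2_eq_square)
    show ?thesis unfolding a b c by simp
  qed
  finally show ?thesis by simp
qed

definition LL :: "nat \<Rightarrow> int set" where
  "LL m = {t. \<bar>t\<bar> \<le> int m \<and> even (int m - t)}"

lemma LL_sub: "LL m \<subseteq> {- int m..int m}"
  unfolding LL_def by auto

lemma finite_LL[simp]: "finite (LL m)"
  using LL_sub finite_subset by blast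

lemma LL_0: "LL 0 = {0}" unfolding LL_def by auto
lemma LL_1: "LL (Suc 0) = {-1, 1}" unfolding LL_def by (auto; presburger)

lemma LL_step: "LL (m + 2) = insert (int m + 2) (insert (- int m - 2) (LL m))"
  unfolding LL_def by (auto simp: abs_if; presburger)

lemma LL_step_sum:
  "(\<Sum>t\<in>LL (m+2). h t) = (\<Sum>t\<in>LL m. h t) + h (int m + 2) + (h (- int m - 2) :: real)"
proof -
  have "int m + 2 \<notin> insert (- int m - 2) (LL m)" "- int m - 2 \<notin> LL m"
    unfolding LL_def by auto
  then show ?thesis unfolding LL_step by simp
qed

lemma LL_card: "(\<Sum>t\<in>LL m. (1::real)) = real m + 1"
proof (induction m rule: nat_induct2)
  case 0 then show ?case by (simp add: LL_0)
next
  case 1 then show ?case by (simp add: LL_1)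
next
  case (step n)
  have "(\<Sum>t\<in>LL (n+2). (1::real)) = (\<Sum>t\<in>LL n. 1) + 1 + 1" by (rule LL_step_sum)
  with step show ?case by simp
qed

lemma LL_abs: "(\<Sum>t\<in>LL m. real_of_int \<bar>t\<bar>) \<le> (real m + 1)^2 / 2"
proof (induction m rule: nat_induct2)
  case 0 then show ?case by (simp add: LL_0)
next
  case 1 then show ?case by (simp add: LL_1)
next
  case (step n)
  have "(\<Sum>t\<in>LL (n+2). real_of_int \<bar>t\<bar>) = (\<Sum>t\<in>LL n. real_of_int \<bar>t\<bar>) + 2 * (real n + 2)"
    by (simp only: LL_step_sum) simp
  also have "\<dots> \<le> (real n + 1)^2 / 2 + 2 * (real n + 2)" using step by simp
  also have "\<dots> = (real (n+2) + 1)^2 / 2" by (simp add: power2_eq_square algebra_simps)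
  finally show ?case .
qed

lemma LL_psi: "(\<Sum>t\<in>LL m. 3/4 * (real_of_int t)^2 + 1/4) = (real m + 1)^3 / 4"
proof (induction m rule: nat_induct2)
  case 0 then show ?case by (simp add: LL_0)
next
  case 1 then show ?case by (simp add: LL_1)
next
  case (step n)
  have "(\<Sum>t\<in>LL (n+2). 3/4 * (real_of_int t)^2 + 1/4) = (\<Sum>t\<in>LL n. 3/4 * (real_of_int t)^2 + 1/4)
      + 2 * (3/4 * (real n + 2)^2 + 1/4)"
    by (simp only: LL_step_sum) (simp add: power2_eq_square algebra_simps)
  also have "\<dots> = (real (n+2) + 1)^3 / 4" using step by (simp add: power2_eq_square power3_eq_cube algebra_simps)
  finally show ?case .
qed



lemma abs_moment:
  fixes q :: "int \<Rightarrow> real" and N :: nat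
  assumes nn: "\<And>t. q t \<ge> 0" and sym: "\<And>t. q (-t) = q t"
    and mono: "\<And>t. t \<ge> -1 \<Longrightarrow> q (t+2) \<le> q t"
    and supp: "\<And>t. \<bar>t\<bar> > int N \<Longrightarrow> q t = 0"
  shows "(\<Sum>t\<in>{-int N..int N}. q t * \<bar>t\<bar>)^2
     \<le> (\<Sum>t\<in>{-int N..int N}. q t) * (\<Sum>t\<in>{-int N..int N}. q t * (3/4 * (real_of_int t)^2 + 1/4))"
proof -
  define \<mu> where "\<mu> m = q (int m) - q (int m + 2)" for m :: nat
  have \<mu>nn: "\<mu> m \<ge> 0" for m unfolding \<mu>_def using mono[of "int m"] by simp
  have rep_nat: "q (int s) = (\<Sum>m\<in>{0..N}. if int s \<in> LL m then \<mu> m else 0)" for s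
  proof (induction "N + 2 - s" arbitrary: s rule: less_induct)
    case less
    show ?case
    proof (cases "s \<le> N")
      case False
      then have "int s \<notin> LL m" if "m \<in> {0..N}" for m using that unfolding LL_def by auto
      then show ?thesis using supp[of "int s"] False by simp
    next
      case True
      have pw: "(if int s \<in> LL m then \<mu> m else 0)
          = (if m = s then \<mu> m else 0) + (if int (s+2) \<in> LL m then \<mu> m else 0)" for m
        unfolding LL_def by (auto simp: algebra_simps; presburger)
      have "(\<Sum>m\<in>{0..N}. if int s \<in> LL m then \<mu> m else 0)
          = (\<Sum>m\<in>{0..N}. if m = s then \<mu> m else 0) + (\<Sum>m\<in>{0..N}. if int (s+2) \<in> LL m then \<mu> m else 0)"
        unfolding pw by (simp add: sum.distrib)
      also have "\<dots> = \<mu> s + q (int (s+2))"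
        using True less[of "s+2"] by simp
      also have "\<dots> = q (int s)" unfolding \<mu>_def by (simp add: add.commute)
      finally show ?thesis by simp
    qed
  qed
  have rep: "q t = (\<Sum>m\<in>{0..N}. if t \<in> LL m then \<mu> m else 0)" for t
  proof -
    have a: "q t = q (int (nat \<bar>t\<bar>))" using sym[of t] by (cases "t \<ge> 0") auto
    have b: "t \<in> LL m \<longleftrightarrow> int (nat \<bar>t\<bar>) \<in> LL m" for m
      unfolding LL_def by (cases "t \<ge> 0") (auto simp: algebra_simps)
    show ?thesis unfolding a rep_nat b ..
  qed
  have sumrep: "(\<Sum>t\<in>{-int N..int N}. q t * h t) = (\<Sum>m\<in>{0..N}. \<mu> m * (\<Sum>t\<in>LL m. h t))" for h
  proof -
    have "(\<Sum>t\<in>{-int N..int N}. q t * h t) = (\<Sum>t\<in>{-int N..int N}. \<Sum>m\<in>{0..N}. if t \<in> LL m then \<mu> m * h t else 0)"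
      by (subst rep) (auto simp: sum_distrib_right intro!: sum.cong)
    also have "\<dots> = (\<Sum>m\<in>{0..N}. \<Sum>t\<in>{-int N..int N}. if t \<in> LL m then \<mu> m * h t else 0)"
      by (rule sum.swap)
    also have "\<dots> = (\<Sum>m\<in>{0..N}. \<Sum>t\<in>LL m. \<mu> m * h t)"
    proof (rule sum.cong[OF refl])
      fix m assume "m \<in> {0..N}"
      then have "{-int N..int N} \<inter> LL m = LL m" using LL_sub[of m] by auto
      moreover have "(\<Sum>t\<in>{-int N..int N} \<inter> LL m. \<mu> m * h t) = (\<Sum>t\<in>{-int N..int N}. if t \<in> LL m then \<mu> m * h t else 0)"
        by (rule sum.inter_restrict) simp
      ultimately show "(\<Sum>t\<in>{-int N..int N}. if t \<in> LL m then \<mu> m * h t else 0) = (\<Sum>t\<in>LL m. \<mu> m * h t)"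
        by simp
    qed
    also have "\<dots> = (\<Sum>m\<in>{0..N}. \<mu> m * (\<Sum>t\<in>LL m. h t))" by (simp add: sum_distrib_left)
    finally show ?thesis .
  qed
  define w where "w m = \<mu> m * (real m + 1)" for m
  define x where "x m = real m + 1" for m :: nat
  have S0: "(\<Sum>t\<in>{-int N..int N}. q t) = (\<Sum>m\<in>{0..N}. w m)"
    using sumrep[of "\<lambda>_. 1"] by (simp add: LL_card[simplified] w_def)
  have S2: "(\<Sum>t\<in>{-int N..int N}. q t * (3/4 * (real_of_int t)^2 + 1/4)) = (\<Sum>m\<in>{0..N}. w m * (x m)^2) / 4"
  proof -
    have "(\<Sum>t\<in>{-int N..int N}. q t * (3/4 * (real_of_int t)^2 + 1/4)) = (\<Sum>m\<in>{0..N}. \<mu> m * (\<Sum>t\<in>LL m. 3/4 * (real_of_int t)^2 + 1/4))"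
      by (rule sumrep)
    also have "\<dots> = (\<Sum>m\<in>{0..N}. \<mu> m * ((real m + 1)^3 / 4))"
      by (simp only: LL_psi)
    also have "\<dots> = (\<Sum>m\<in>{0..N}. w m * (x m)^2 / 4)"
      by (intro sum.cong refl) (simp add: w_def x_def power2_eq_square power3_eq_cube)
    also have "\<dots> = (\<Sum>m\<in>{0..N}. w m * (x m)^2) / 4"
      by (simp add: sum_divide_distrib)
    finally show ?thesis .
  qed
  have S1: "(\<Sum>t\<in>{-int N..int N}. q t * \<bar>t\<bar>) \<le> (\<Sum>m\<in>{0..N}. w m * x m) / 2"
  proof -
    have "(\<Sum>t\<in>{-int N..int N}. q t * \<bar>t\<bar>) = (\<Sum>m\<in>{0..N}. \<mu> m * (\<Sum>t\<in>LL m. real_of_int \<bar>t\<bar>))"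
      using sumrep[of "\<lambda>t. real_of_int \<bar>t\<bar>"] by simp
    also have "\<dots> \<le> (\<Sum>m\<in>{0..N}. \<mu> m * ((real m + 1)^2 / 2))"
      by (intro sum_mono mult_left_mono LL_abs \<mu>nn)
    also have "\<dots> = (\<Sum>m\<in>{0..N}. w m * x m / 2)"
      by (intro sum.cong refl) (simp add: w_def x_def power2_eq_square)
    also have "\<dots> = (\<Sum>m\<in>{0..N}. w m * x m) / 2"
      by (simp add: sum_divide_distrib)
    finally show ?thesis .
  qed
  have S1nn: "0 \<le> (\<Sum>t\<in>{-int N..int N}. q t * \<bar>t\<bar>)"
    using nn by (intro sum_nonneg) simp
  have wnn: "w m \<ge> 0" for m unfolding w_def using \<mu>nn[of m] by simp
  have "(\<Sum>t\<in>{-int N..int N}. q t * \<bar>t\<bar>)^2 \<le> ((\<Sum>m\<in>{0..N}. w m * x m) / 2)^2"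
    using S1 S1nn by (intro power_mono) auto
  also have "\<dots> = (\<Sum>m\<in>{0..N}. w m * x m)^2 / 4" by (simp add: power2_eq_square)
  also have "\<dots> \<le> (\<Sum>m\<in>{0..N}. w m) * (\<Sum>m\<in>{0..N}. w m * (x m)^2) / 4"
    using wcs[of "{0..N}" w x] wnn by simp
  also have "\<dots> = (\<Sum>t\<in>{-int N..int N}. q t) * (\<Sum>t\<in>{-int N..int N}. q t * (3/4 * (real_of_int t)^2 + 1/4))"
    unfolding S0 S2 by simp
  finally show ?thesis .
qed



lemma abs_TT_sum:
  assumes r: "r \<ge> 1" and d: "d \<ge> 1"
  shows "(\<Sum>x\<in>grid r d. real_of_int \<bar>TT r d x\<bar>) \<le> real r ^ d * real r * sqrt (real d) / 2"
proof -
  define N where "N = d * (r - 1)"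
  have NN: "int N = int d * (int r - 1)" unfolding N_def using r by (simp add: of_nat_diff)
  have img: "TT r d ` grid r d \<subseteq> {-int N..int N}"
  proof
    fix y assume "y \<in> TT r d ` grid r d"
    then obtain x where x: "x \<in> grid r d" "y = TT r d x" by auto
    have "\<bar>TT r d x\<bar> \<le> int N" using abs_TT[OF x(1)] NN by simp
    then show "y \<in> {-int N..int N}" using x(2) by (simp add: abs_le_iff)
  qed
  have supp: "\<bar>t\<bar> > int N \<Longrightarrow> qd r d t = 0" for t using qd_supp NN by simp
  have A: "(\<Sum>x\<in>grid r d. real_of_int \<bar>TT r d x\<bar>) = (\<Sum>t\<in>{-int N..int N}. qd r d t * \<bar>t\<bar>)"
    using qd_sum[OF _ img, of "\<lambda>t. real_of_int \<bar>t\<bar>"] by simp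
  have B: "(\<Sum>t\<in>{-int N..int N}. qd r d t) = real r ^ d"
    using qd_sum[OF _ img, of "\<lambda>t. 1"] by (simp add: card_grid)
  have C: "(\<Sum>t\<in>{-int N..int N}. qd r d t * (3/4 * (real_of_int t)^2 + 1/4))
      = (\<Sum>x\<in>grid r d. 3/4 * (real_of_int (TT r d x))^2 + 1/4)"
    using qd_sum[OF _ img, of "\<lambda>t. 3/4 * (real_of_int t)^2 + 1/4"] by simp
  also have "\<dots> = 3/4 * (real r ^ d * real d * (real r ^ 2 - 1) / 3) + real r ^ d / 4"
  proof -
    have "(\<Sum>x\<in>grid r d. 3/4 * (real_of_int (TT r d x))^2 + 1/4)
        = 3/4 * (\<Sum>x\<in>grid r d. (real_of_int (TT r d x))^2) + (\<Sum>x\<in>grid r d. 1/4)"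
      by (simp only: sum.distrib sum_distrib_left)
    then show ?thesis by (simp add: M2 card_grid)
  qed
  finally have C': "(\<Sum>t\<in>{-int N..int N}. qd r d t * (3/4 * (real_of_int t)^2 + 1/4))
      = real r ^ d * (real d * (real r ^ 2 - 1) + 1) / 4" by (simp add: field_simps)
  have "(\<Sum>x\<in>grid r d. real_of_int \<bar>TT r d x\<bar>)^2 \<le> real r ^ d * (real r ^ d * (real d * (real r ^ 2 - 1) + 1) / 4)"
    unfolding A using abs_moment[of "qd r d" N, OF qd_nonneg qd_sym qd_mono supp] unfolding B C' by simp
  also have "\<dots> \<le> (real r ^ d * real r * sqrt (real d) / 2)^2"
  proof -
    have "real d * (real r ^ 2 - 1) + 1 \<le> real d * real r ^ 2" using d by (simp add: algebra_simps)
    then have "real r ^ d * (real r ^ d * (real d * (real r ^ 2 - 1) + 1) / 4) \<le> real r ^ d * (real r ^ d * (real d * real r ^ 2) / 4)"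
      by (intro mult_left_mono divide_right_mono) auto
    also have "\<dots> = (real r ^ d * real r * sqrt (real d) / 2)^2"
      by (simp add: power2_eq_square power_mult_distrib algebra_simps)
    finally show ?thesis .
  qed
  finally show ?thesis
    by (rule power2_le_imp_le) simp
qed



lemma card_lt: "c \<in> {1..r} \<Longrightarrow> card {a\<in>{1..r}. a < c} = c - 1"
proof -
  assume "c \<in> {1..r}"
  then have "{a\<in>{1..r}. a < c} = {1..<c}" by auto
  then show ?thesis by simp
qed

lemma card_gt: "c \<in> {1..r} \<Longrightarrow> card {a\<in>{1..r}. c < a} = r - c"
proof -
  assume "c \<in> {1..r}"
  then have "{a\<in>{1..r}. c < a} = {c<..r}" by auto
  then show ?thesis by simp
qed

lemma grid_val: "x \<in> grid r d \<Longrightarrow> i < d \<Longrightarrow> x i \<in> {1..r}"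
  unfolding grid_def by (auto simp: PiE_iff)

lemma mono_pairs:
  fixes P :: "(nat \<Rightarrow> nat) \<Rightarrow> bool"
  assumes up: "\<And>x y. x \<in> grid r d \<Longrightarrow> y \<in> grid r d \<Longrightarrow> P x \<Longrightarrow> grid_le d x y \<Longrightarrow> P y"
    and i: "i < d"
  shows "real (card {(x,a). x \<in> grid r d \<and> a \<in> {1..r} \<and> (P x \<noteq> P (x(i:=a)))})
       = 2 * (\<Sum>x\<in>{x\<in>grid r d. P x}. real_of_int (cc r (x i)))"
proof -
  let ?G = "grid r d" and ?R = "{1..r}"
  define \<sigma> where "\<sigma> = (\<lambda>(x::nat\<Rightarrow>nat, a::nat). (x(i:=a), x i))"
  have \<sigma>\<sigma>: "\<sigma> (\<sigma> p) = p" for p unfolding \<sigma>_def by (cases p) auto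
  have inj: "inj_on \<sigma> A" for A by (metis \<sigma>\<sigma> inj_on_inverseI)
  have le1: "grid_le d x (x(i:=a))" if "x i \<le> a" for x a
    unfolding grid_le_def using that by auto
  have le2: "grid_le d (x(i:=a)) x" if "a \<le> x i" for x a
    unfolding grid_le_def using that by auto
  have fin: "finite (?G \<times> ?R)" by simp
  define P1 where "P1 = {(x,a). x \<in> ?G \<and> a \<in> ?R \<and> P x \<and> \<not> P (x(i:=a))}"
  define P2 where "P2 = {(x,a). x \<in> ?G \<and> a \<in> ?R \<and> \<not> P x \<and> P (x(i:=a))}"
  define Lo where "Lo = {(x,a). x \<in> ?G \<and> a \<in> ?R \<and> P x \<and> a < x i}"
  define Hi where "Hi = {(x,a). x \<in> ?G \<and> a \<in> ?R \<and> P x \<and> x i < a}"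
  define Q where "Q = {(x,a). x \<in> ?G \<and> a \<in> ?R \<and> P x \<and> a < x i \<and> P (x(i:=a))}"
  have subs: "P1 \<subseteq> ?G \<times> ?R" "P2 \<subseteq> ?G \<times> ?R" "Q \<subseteq> ?G \<times> ?R" "Hi \<subseteq> ?G \<times> ?R" "Lo \<subseteq> ?G \<times> ?R"
    unfolding P1_def P2_def Q_def Hi_def Lo_def by auto
  have finP1: "finite P1" and finP2: "finite P2" and finQ: "finite Q" and finHi: "finite Hi" and finLo: "finite Lo"
    using subs fin finite_subset by blast+
  have "\<sigma> ` P1 = P2"
  proof
    show "\<sigma> ` P1 \<subseteq> P2"
      unfolding P1_def P2_def \<sigma>_def using grid_upd[OF _ i] grid_val[OF _ i] by auto
    show "P2 \<subseteq> \<sigma> ` P1"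
    proof
      fix p assume p: "p \<in> P2"
      have "\<sigma> p \<in> P1" using p unfolding P1_def P2_def \<sigma>_def using grid_upd[OF _ i] grid_val[OF _ i] by auto
      then show "p \<in> \<sigma> ` P1" using \<sigma>\<sigma>[of p] by force
    qed
  qed
  then have cP2: "card P2 = card P1" using card_image[OF inj] by metis
  have "\<sigma> ` Hi = Q"
  proof
    show "\<sigma> ` Hi \<subseteq> Q"
    proof
      fix q assume "q \<in> \<sigma> ` Hi"
      then obtain x a where xa: "(x,a) \<in> Hi" "q = (x(i:=a), x i)" unfolding \<sigma>_def by auto
      then have x: "x \<in> ?G" "a \<in> ?R" "P x" "x i < a" unfolding Hi_def by auto
      have "P (x(i:=a))" using up[OF x(1) grid_upd[OF x(1) i x(2)] x(3) le1] x(4) by simp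
      then show "q \<in> Q" using xa(2) x grid_upd[OF x(1) i x(2)] grid_val[OF x(1) i]
        unfolding Q_def by auto
    qed
    show "Q \<subseteq> \<sigma> ` Hi"
    proof
      fix q assume q: "q \<in> Q"
      then obtain y b where yb: "q = (y, b)" "y \<in> ?G" "b \<in> ?R" "P y" "b < y i" "P (y(i:=b))"
        unfolding Q_def by auto
      have "\<sigma> q \<in> Hi" using yb grid_upd[OF yb(2) i yb(3)] grid_val[OF yb(2) i]
        unfolding Hi_def \<sigma>_def by auto
      then show "q \<in> \<sigma> ` Hi" using \<sigma>\<sigma>[of q] by force
    qed
  qed
  then have cQ: "card Q = card Hi" using card_image[OF inj] by metis
  have LoU: "Lo = P1 \<union> Q"
  proof
    show "P1 \<union> Q \<subseteq> Lo"
    proof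
      fix p assume p: "p \<in> P1 \<union> Q"
      then obtain x a where xa: "p = (x,a)" "x \<in> ?G" "a \<in> ?R" "P x" unfolding P1_def Q_def by auto
      have "a < x i"
      proof (rule ccontr)
        assume "\<not> a < x i"
        then have "P (x(i:=a))" using up[OF xa(2) grid_upd[OF xa(2) i xa(3)] xa(4) le1] by simp
        then have "p \<notin> P1" using xa(1) unfolding P1_def by auto
        moreover have "p \<notin> Q" using xa(1) \<open>\<not> a < x i\<close> unfolding Q_def by auto
        ultimately show False using p by auto
      qed
      then show "p \<in> Lo" using xa unfolding Lo_def by auto
    qed
  qed (auto simp: Lo_def P1_def Q_def)
  have disj: "P1 \<inter> Q = {}" unfolding P1_def Q_def by auto
  have cLo: "card Lo = card P1 + card Q" unfolding LoU using card_Un_disjoint[OF finP1 finQ disj] .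
  have pairsU: "{(x,a). x \<in> ?G \<and> a \<in> ?R \<and> (P x \<noteq> P (x(i:=a)))} = P1 \<union> P2"
    unfolding P1_def P2_def by auto
  have disj2: "P1 \<inter> P2 = {}" unfolding P1_def P2_def by auto
  have cPairs: "card {(x,a). x \<in> ?G \<and> a \<in> ?R \<and> (P x \<noteq> P (x(i:=a)))} = 2 * card P1"
    unfolding pairsU card_Un_disjoint[OF finP1 finP2 disj2] cP2 by simp
  let ?B = "{x\<in>?G. P x}"
  have LoS: "Lo = (SIGMA x:?B. {a\<in>?R. a < x i})" unfolding Lo_def by auto
  have HiS: "Hi = (SIGMA x:?B. {a\<in>?R. x i < a})" unfolding Hi_def by auto
  have cLo': "card Lo = (\<Sum>x\<in>?B. x i - 1)"
  proof -
    have "card Lo = (\<Sum>x\<in>?B. card {a\<in>?R. a < x i})" unfolding LoS by (rule card_SigmaI) auto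
    also have "\<dots> = (\<Sum>x\<in>?B. x i - 1)"
      by (rule sum.cong[OF refl], rule card_lt) (use grid_val[OF _ i] in auto)
    finally show ?thesis .
  qed
  have cHi': "card Hi = (\<Sum>x\<in>?B. r - x i)"
  proof -
    have "card Hi = (\<Sum>x\<in>?B. card {a\<in>?R. x i < a})" unfolding HiS by (rule card_SigmaI) auto
    also have "\<dots> = (\<Sum>x\<in>?B. r - x i)"
      by (rule sum.cong[OF refl], rule card_gt) (use grid_val[OF _ i] in auto)
    finally show ?thesis .
  qed
  have "(\<Sum>x\<in>?B. real_of_int (cc r (x i))) = (\<Sum>x\<in>?B. real (x i - 1) - real (r - x i))"
  proof (rule sum.cong[OF refl])
    fix x assume "x \<in> ?B"
    then have "x i \<in> ?R" using grid_val[OF _ i] by auto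
    then show "real_of_int (cc r (x i)) = real (x i - 1) - real (r - x i)"
      unfolding cc_def by (auto simp: of_nat_diff)
  qed
  also have "\<dots> = real (card Lo) - real (card Hi)"
    unfolding cLo' cHi' by (simp add: sum_subtractf)
  also have "\<dots> = real (card P1)" using cLo cQ by simp
  finally show ?thesis using cPairs by simp
qed



lemma mono_infl:
  fixes P :: "(nat \<Rightarrow> nat) \<Rightarrow> bool"
  assumes up: "\<And>x y. x \<in> grid r d \<Longrightarrow> y \<in> grid r d \<Longrightarrow> P x \<Longrightarrow> grid_le d x y \<Longrightarrow> P y"
    and r: "r \<ge> 1" and d: "d \<ge> 1"
  shows "(\<Sum>i<d. 2 * real (card {(x,a). x \<in> grid r d \<and> a \<in> {1..r} \<and> (P x \<noteq> P (x(i:=a)))})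
            / real (card (grid r d) * r)) \<le> sqrt (real d)"
proof -
  let ?G = "grid r d"
  let ?B = "{x\<in>?G. P x}"
  define D where "D = real r ^ d * real r"
  have Dpos: "D > 0" unfolding D_def using r by simp
  have monoD: "\<And>x y. x \<le> y \<Longrightarrow> 4 * x / D \<le> 4 * y / D" using Dpos by (simp add: divide_right_mono)
  have "(\<Sum>i<d. 2 * real (card {(x,a). x \<in> ?G \<and> a \<in> {1..r} \<and> (P x \<noteq> P (x(i:=a)))}) / real (card ?G * r))
      = (\<Sum>i<d. 4 * (\<Sum>x\<in>?B. real_of_int (cc r (x i))) / D)"
  proof (rule sum.cong[OF refl])
    fix i assume "i \<in> {..<d}"
    then have i: "i < d" by simp
    show "2 * real (card {(x,a). x \<in> ?G \<and> a \<in> {1..r} \<and> (P x \<noteq> P (x(i:=a)))}) / real (card ?G * r)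
        = 4 * (\<Sum>x\<in>?B. real_of_int (cc r (x i))) / D"
      using mono_pairs[of r d P i, OF up i] by (simp add: card_grid D_def)
  qed
  also have "\<dots> = 4 * (\<Sum>i<d. \<Sum>x\<in>?B. real_of_int (cc r (x i))) / D"
    by (simp add: sum_divide_distrib sum_distrib_left)
  also have "(\<Sum>i<d. \<Sum>x\<in>?B. real_of_int (cc r (x i))) = (\<Sum>x\<in>?B. real_of_int (TT r d x))"
    unfolding TT_def by (subst sum.swap) simp
  also have "(\<Sum>x\<in>?B. real_of_int (TT r d x)) \<le> (\<Sum>x\<in>?G. max (real_of_int (TT r d x)) 0)"
  proof -
    have "(\<Sum>x\<in>?B. real_of_int (TT r d x)) \<le> (\<Sum>x\<in>?B. max (real_of_int (TT r d x)) 0)"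
      by (intro sum_mono) simp
    also have "\<dots> \<le> (\<Sum>x\<in>?G. max (real_of_int (TT r d x)) 0)"
      by (intro sum_mono2) auto
    finally show ?thesis .
  qed
  also have "(\<Sum>x\<in>?G. max (real_of_int (TT r d x)) 0)
      = ((\<Sum>x\<in>?G. real_of_int \<bar>TT r d x\<bar>) + (\<Sum>x\<in>?G. real_of_int (TT r d x))) / 2"
    by (simp add: sum.distrib[symmetric] sum_divide_distrib) (intro sum.cong refl; simp add: max_def)
  also have "\<dots> \<le> (real r ^ d * real r * sqrt (real d) / 2) / 2"
    using abs_TT_sum[OF r d] by (simp add: M1)
  finally have "(\<Sum>i<d. 2 * real (card {(x,a). x \<in> ?G \<and> a \<in> {1..r} \<and> (P x \<noteq> P (x(i:=a)))}) / real (card ?G * r))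
      \<le> 4 * ((real r ^ d * real r * sqrt (real d) / 2) / 2) / D"
    using monoD by blast
  also have "\<dots> = sqrt (real d)" using Dpos r unfolding D_def by (simp add: field_simps)
  finally show ?thesis .
qed



definition Bj :: "nat \<Rightarrow> nat \<Rightarrow> ((nat\<Rightarrow>nat)\<Rightarrow>nat) \<Rightarrow> nat \<Rightarrow> (nat\<Rightarrow>nat) \<Rightarrow> bool" where
  "Bj r d g j x \<longleftrightarrow> (\<exists>c. (\<forall>i\<in>{1..j}. c i \<in> grid r d) \<and> (\<forall>i\<in>{1..<j}. grid_le d (c i) (c (Suc i)))
      \<and> grid_le d (c j) x \<and> g (c 1) = 1 \<and> (\<forall>i\<in>{1..<j}. g (c i) \<noteq> g (c (Suc i))))"

lemma grid_le_trans: "grid_le d x y \<Longrightarrow> grid_le d y z \<Longrightarrow> grid_le d x z"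
  unfolding grid_le_def using le_trans by blast

lemma grid_le_refl: "grid_le d x x"
  unfolding grid_le_def by simp

lemma Bj_up: "Bj r d g j x \<Longrightarrow> grid_le d x y \<Longrightarrow> Bj r d g j y"
  unfolding Bj_def using grid_le_trans by blast

lemma Bj_down: "Bj r d g (Suc j) x \<Longrightarrow> 1 \<le> j \<Longrightarrow> Bj r d g j x"
proof -
  assume "Bj r d g (Suc j) x" "1 \<le> j"
  then obtain c where c: "\<forall>i\<in>{1..Suc j}. c i \<in> grid r d" "\<forall>i\<in>{1..<Suc j}. grid_le d (c i) (c (Suc i))"
    "grid_le d (c (Suc j)) x" "g (c 1) = 1" "\<forall>i\<in>{1..<Suc j}. g (c i) \<noteq> g (c (Suc i))"
    unfolding Bj_def by blast
  have "grid_le d (c j) (c (Suc j))" using c(2) \<open>1 \<le> j\<close> by auto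
  then have "grid_le d (c j) x" using c(3) grid_le_trans by blast
  then show ?thesis unfolding Bj_def using c by (intro exI[of _ c]) auto
qed

lemma Bj_down': "Bj r d g j x \<Longrightarrow> 1 \<le> j' \<Longrightarrow> j' \<le> j \<Longrightarrow> Bj r d g j' x"
proof (induction j)
  case 0 then show ?case by simp
next
  case (Suc j)
  show ?case
  proof (cases "j' = Suc j")
    case True then show ?thesis using Suc by simp
  next
    case False
    then have "j' \<le> j" "1 \<le> j" using Suc by auto
    then show ?thesis using Suc Bj_down by blast
  qed
qed

lemma Bj_none: "k_monotone r d k g \<Longrightarrow> \<not> Bj r d g (Suc k) x"
  unfolding k_monotone_def Bj_def atLeastLessThanSuc_atLeastAtMost by auto

lemma Bj_parity:
  assumes g01: "\<forall>x\<in>grid r d. g x \<in> {0, 1}" and km: "k_monotone r d k g" and x: "x \<in> grid r d"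
  shows "g x = (if odd (card {j\<in>{1..k}. Bj r d g j x}) then 1 else 0)"
proof -
  let ?S = "{j\<in>{1..k}. Bj r d g j x}"
  show ?thesis
  proof (cases "?S = {}")
    case True
    have "g x \<noteq> 1"
    proof
      assume gx: "g x = 1"
      have B1: "Bj r d g 1 x" unfolding Bj_def using x gx grid_le_refl
        by (intro exI[of _ "\<lambda>_. x"]) auto
      show False
      proof (cases "k = 0")
        case True then show False using Bj_none[OF km, of x] B1 by simp
      next
        case False then have "1 \<in> ?S" using B1 by auto
        then show False using True by blast
      qed
    qed
    then have gx0: "g x = 0" using g01 x by auto
    have cS: "card ?S = 0" using True by (simp only: card.empty)
    show ?thesis unfolding cS gx0 by simp
  next
    case False
    define M where "M = Max ?S"
    have finS: "finite ?S" by simp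
    have MS: "M \<in> ?S" unfolding M_def using Max_in[OF finS False] .
    have SM: "?S = {1..M}"
    proof
      show "?S \<subseteq> {1..M}" unfolding M_def using Max_ge[OF finS] by auto
      show "{1..M} \<subseteq> ?S" using MS Bj_down' by auto
    qed
    have cardS: "card ?S = M" unfolding SM by simp
    have M1: "1 \<le> M" and Mk: "M \<le> k" and BM: "Bj r d g M x" using MS by auto
    obtain c where c: "\<forall>i\<in>{1..M}. c i \<in> grid r d" "\<forall>i\<in>{1..<M}. grid_le d (c i) (c (Suc i))"
      "grid_le d (c M) x" "g (c 1) = 1" "\<forall>i\<in>{1..<M}. g (c i) \<noteq> g (c (Suc i))"
      using BM unfolding Bj_def by blast
    have alt: "i \<in> {1..M} \<Longrightarrow> g (c i) = (if odd i then 1 else 0)" for i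
    proof (induction i)
      case 0 then show ?case by simp
    next
      case (Suc i)
      show ?case
      proof (cases "i = 0")
        case True then show ?thesis using c(4) by simp
      next
        case False
        then have i: "i \<in> {1..M}" "i \<in> {1..<M}" using Suc.prems by auto
        have "g (c (Suc i)) \<in> {0,1}" using g01 c(1) Suc.prems by blast
        moreover have "g (c (Suc i)) \<noteq> g (c i)" using c(5) i(2) by metis
        ultimately show ?thesis using Suc.IH[OF i(1)] by auto
      qed
    qed
    have "g x = g (c M)"
    proof (rule ccontr)
      assume ne: "g x \<noteq> g (c M)"
      define c' where "c' = c(Suc M := x)"
      have "Bj r d g (Suc M) x"
        unfolding Bj_def
      proof (intro exI[of _ c'] conjI ballI)
        fix i assume "i \<in> {1..Suc M}" then show "c' i \<in> grid r d"
          using c(1) x unfolding c'_def by (cases "i = Suc M") auto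
      next
        fix i assume i: "i \<in> {1..<Suc M}"
        show "grid_le d (c' i) (c' (Suc i))"
        proof (cases "i = M")
          case True then show ?thesis using c(3) unfolding c'_def by simp
        next
          case False then show ?thesis using c(2) i unfolding c'_def by auto
        qed
      next
        show "grid_le d (c' (Suc M)) x" unfolding c'_def by (simp add: grid_le_refl)
      next
        show "g (c' 1) = 1" using c(4) M1 unfolding c'_def by simp
      next
        fix i assume i: "i \<in> {1..<Suc M}"
        show "g (c' i) \<noteq> g (c' (Suc i))"
        proof (cases "i = M")
          case True then show ?thesis using ne unfolding c'_def by simp
        next
          case False then show ?thesis using c(5) i unfolding c'_def by auto
        qed
      qed
      moreover have "Suc M \<le> k"
      proof (rule ccontr)
        assume "\<not> Suc M \<le> k"
        then have "M = k" using Mk by simp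
        then show False using Bj_none[OF km, of x] \<open>Bj r d g (Suc M) x\<close> by simp
      qed
      ultimately have "Suc M \<in> ?S" by simp
      then have "Suc M \<le> M" unfolding M_def using Max_ge[OF finS] by blast
      then show False by simp
    qed
    then show ?thesis using alt[of M] M1 cardS by simp
  qed
qed



theorem lemma6p6:
  fixes r d k :: nat and g :: "(nat \<Rightarrow> nat) \<Rightarrow> nat"
  assumes "\<forall>x\<in>grid r d. g x \<in> {0, 1}"
    and "k_monotone r d k g"
  shows "influence r d (\<lambda>x. (-1) ^ g x) \<le> real k * sqrt (real d)"
proof (cases "r \<ge> 1 \<and> d \<ge> 1")
  case False
  then have "r = 0 \<or> d = 0" by auto
  then have "influence r d (\<lambda>x. (-1) ^ g x) = 0"
  proof
    assume "r = 0"
    then show ?thesis unfolding influence_def influence_i_def by simp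
  next
    assume "d = 0"
    then show ?thesis unfolding influence_def by simp
  qed
  then show ?thesis by simp
next
  case True
  then have r: "r \<ge> 1" and d: "d \<ge> 1" by auto
  let ?G = "grid r d"
  let ?f = "\<lambda>x. ((-1::real) ^ g x)"
  define Pj where "Pj j i = {(x,a). x \<in> ?G \<and> a \<in> {1..r} \<and> (Bj r d g j x \<noteq> Bj r d g j (x(i:=a)))}" for j i
  define C where "C = real (card ?G * r)"
  have Cpos: "C > 0" unfolding C_def using r by (simp add: card_grid)
  have fin: "finite (Pj j i)" for j i
  proof -
    have "Pj j i \<subseteq> ?G \<times> {1..r}" unfolding Pj_def by auto
    then show ?thesis by (rule finite_subset) simp
  qed
  have step: "influence_i r d ?f i \<le> (\<Sum>j\<in>{1..k}. 2 * real (card (Pj j i)) / C)" if i: "i < d" for i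
  proof -
    have sub: "{(x,a). x \<in> ?G \<and> a \<in> {1..r} \<and> ?f x \<noteq> ?f (x(i:=a))} \<subseteq> (\<Union>j\<in>{1..k}. Pj j i)"
    proof
      fix p assume p: "p \<in> {(x,a). x \<in> ?G \<and> a \<in> {1..r} \<and> ?f x \<noteq> ?f (x(i:=a))}"
      then obtain x a where xa: "p = (x,a)" "x \<in> ?G" "a \<in> {1..r}" "?f x \<noteq> ?f (x(i:=a))" by auto
      have y: "x(i:=a) \<in> ?G" using grid_upd[OF xa(2) i xa(3)] .
      show "p \<in> (\<Union>j\<in>{1..k}. Pj j i)"
      proof (rule ccontr)
        assume "p \<notin> (\<Union>j\<in>{1..k}. Pj j i)"
        then have "\<forall>j\<in>{1..k}. Bj r d g j x = Bj r d g j (x(i:=a))"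
          using xa unfolding Pj_def by auto
        then have "{j\<in>{1..k}. Bj r d g j x} = {j\<in>{1..k}. Bj r d g j (x(i:=a))}" by auto
        then have "g x = g (x(i:=a))"
          using Bj_parity[OF assms xa(2)] Bj_parity[OF assms y] by simp
        then show False using xa(4) by simp
      qed
    qed
    have "card {(x,a). x \<in> ?G \<and> a \<in> {1..r} \<and> ?f x \<noteq> ?f (x(i:=a))} \<le> card (\<Union>j\<in>{1..k}. Pj j i)"
      by (rule card_mono[OF _ sub]) (simp add: fin)
    also have "\<dots> \<le> (\<Sum>j\<in>{1..k}. card (Pj j i))"
      by (rule card_UN_le) simp
    finally have "real (card {(x,a). x \<in> ?G \<and> a \<in> {1..r} \<and> ?f x \<noteq> ?f (x(i:=a))}) \<le> real (\<Sum>j\<in>{1..k}. card (Pj j i))"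
      by (rule of_nat_mono)
    then have "real (card {(x,a). x \<in> ?G \<and> a \<in> {1..r} \<and> ?f x \<noteq> ?f (x(i:=a))}) \<le> (\<Sum>j\<in>{1..k}. real (card (Pj j i)))"
      by simp
    then have "2 * real (card {(x,a). x \<in> ?G \<and> a \<in> {1..r} \<and> ?f x \<noteq> ?f (x(i:=a))}) / C
        \<le> 2 * (\<Sum>j\<in>{1..k}. real (card (Pj j i))) / C"
      using Cpos by (intro divide_right_mono mult_left_mono) auto
    also have "\<dots> = (\<Sum>j\<in>{1..k}. 2 * real (card (Pj j i)) / C)"
      by (simp add: sum_distrib_left sum_divide_distrib)
    finally show ?thesis unfolding influence_i_def C_def .
  qed
  have "influence r d ?f \<le> (\<Sum>i<d. \<Sum>j\<in>{1..k}. 2 * real (card (Pj j i)) / C)"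
    unfolding influence_def by (intro sum_mono step) simp
  also have "\<dots> = (\<Sum>j\<in>{1..k}. \<Sum>i<d. 2 * real (card (Pj j i)) / C)"
    by (rule sum.swap)
  also have "\<dots> \<le> (\<Sum>j\<in>{1..k}. sqrt (real d))"
  proof (rule sum_mono)
    fix j assume "j \<in> {1..k}"
    have up: "\<And>x y. x \<in> ?G \<Longrightarrow> y \<in> ?G \<Longrightarrow> Bj r d g j x \<Longrightarrow> grid_le d x y \<Longrightarrow> Bj r d g j y"
      using Bj_up by blast
    show "(\<Sum>i<d. 2 * real (card (Pj j i)) / C) \<le> sqrt (real d)"
      using mono_infl[of r d "Bj r d g j", OF up r d] unfolding Pj_def C_def .
  qed
  also have "\<dots> = real k * sqrt (real d)" by simp
  finally show ?thesis .
qed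

end
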